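(* For integers $i\ge0$, $s\ge1$ and $n>s$, let $b_{i,s}(n)$ be the coefficient of $t^i$ in the power series expansion of $\frac{f_n(t)}{f_s(t)f_{n-s}(t)}$. Then for fixed $i\ge 0$ and $s\ge 1$, the function $n\mapsto b_{i,s}(n)$ is constant for $n\ge\max(i,1)+s$.
   Context: $f_n(t):=(1-t^2)(1-t^3)\cdots(1-t^n)$ for $n\ge1$ (so $f_1=1$). *)

theory Defs
  imports "HOL-Computational_Algebra.Formal_Power_Series"
begin

definition f_ps :: "nat \<Rightarrow> rat fps" where
  "f_ps n = (\<Prod>k\<in>{2..n}. 1 - fps_X ^ k)"

definition b_coeff :: "nat \<Rightarrow> nat \<Rightarrow> nat \<Rightarrow> rat" where
  "b_coeff i s n = fps_nth (f_ps n / (f_ps s * f_ps (n - s))) i"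

end

theory Submission
  imports Defs
begin

lemma f_ps_0: "fps_nth (f_ps n) 0 = 1"
  unfolding f_ps_def by (induction n) (auto simp: atLeastAtMostSuc_conv)

lemma f_ps_Suc: "n \<ge> 1 \<Longrightarrow> f_ps (Suc n) = f_ps n * (1 - fps_X ^ Suc n)"
  unfolding f_ps_def by (simp add: atLeastAtMostSuc_conv mult.commute)

lemma f_ps_nz: "f_ps n \<noteq> 0"
  using f_ps_0[of n] by auto

lemma h_mult: "(f_ps n / (f_ps s * f_ps (n - s))) * (f_ps s * f_ps (n - s)) = f_ps n"
proof -
  have c: "fps_nth (f_ps s * f_ps (n - s)) 0 \<noteq> 0" by (simp add: f_ps_0)
  show ?thesis using c
    by (simp add: fps_divide_unit mult.assoc inverse_mult_eq_1)
qed

lemma coeff_1mX: "k > j \<Longrightarrow> fps_nth (h * (1 - fps_X ^ k)) j = fps_nth (h :: rat fps) j"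
  by (simp add: algebra_simps fps_X_power_mult_right_nth)

lemma step:
  assumes "s \<ge> 1" "n \<ge> i + s" "n \<ge> s + 1"
  shows "b_coeff i s (Suc n) = b_coeff i s n"
proof -
  define h1 where "h1 = f_ps (Suc n) / (f_ps s * f_ps (Suc n - s))"
  define h0 where "h0 = f_ps n / (f_ps s * f_ps (n - s))"
  have e1: "Suc n - s = Suc (n - s)" using assms by simp
  have A: "h1 * (f_ps s * f_ps (Suc n - s)) = f_ps (Suc n)" unfolding h1_def by (rule h_mult)
  have B: "h0 * (f_ps s * f_ps (n - s)) = f_ps n" unfolding h0_def by (rule h_mult)
  have "(h1 * (1 - fps_X ^ Suc (n - s))) * (f_ps s * f_ps (n - s))
        = h1 * (f_ps s * f_ps (Suc n - s))"
    using assms by (simp add: e1 f_ps_Suc algebra_simps)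
  also have "\<dots> = f_ps n * (1 - fps_X ^ Suc n)" using A assms by (simp add: f_ps_Suc)
  also have "\<dots> = (h0 * (1 - fps_X ^ Suc n)) * (f_ps s * f_ps (n - s))"
    using B by (simp add: algebra_simps)
  finally have C: "h1 * (1 - fps_X ^ Suc (n - s)) = h0 * (1 - fps_X ^ Suc n)"
    using f_ps_nz by (simp del: power_Suc)
  have "fps_nth h1 i = fps_nth (h1 * (1 - fps_X ^ Suc (n - s))) i"
    using assms by (subst coeff_1mX) auto
  also have "\<dots> = fps_nth (h0 * (1 - fps_X ^ Suc n)) i" using C by simp
  also have "\<dots> = fps_nth h0 i" using assms by (subst coeff_1mX) auto
  finally show ?thesis unfolding b_coeff_def h1_def h0_def .
qed

lemma const:
  assumes "s \<ge> 1" "n \<ge> max i 1 + s"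
  shows "b_coeff i s n = b_coeff i s (max i 1 + s)"
  using assms(2)
proof (induction n rule: dec_induct)
  case base then show ?case by simp
next
  case (step n)
  then show ?case using Submission.step[of s i n] assms by simp
qed

theorem lemma5p1:
  fixes i s :: nat
  assumes "s \<ge> 1"
  shows "\<forall>n m. n \<ge> max i 1 + s \<and> m \<ge> max i 1 + s \<longrightarrow> b_coeff i s n = b_coeff i s m"
  using const[OF assms] by metis

end
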